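(* Let $G$ be a marked ribbon graph (with exactly one marked vertex) decorated with arrows and edge weights $\mathbf b=(b_e)$, let $F\subseteq E(G)$, and let $G^F$ be the partial dual of $G$ with respect to $F$. Then \[R_G(1,\mathbf b,c)=\Big(\prod_{e\in F}b_e\Big)\,R_{G^F}(1,\mathbf b',c),\qquad b'_e=\begin{cases}b_e & e\notin F,\\ 1/b_e & e\in F.\end{cases}\]
   Context: A ribbon graph $G=(V(G),E(G))$ is a surface with boundary that is a union of discs, the vertices $V(G)$ and the edges $E(G)$, such that vertices and edges intersect in disjoint line segments, each segment lies on exactly one vertex and one edge, and each edge contains exactly two such segments (its attaching arcs). A marked ribbon graph is a ribbon graph in which some vertices carry a single marking, a point on the vertex boundary away from the attaching arcs, together with an orientation of that vertex boundary. Arrows may lie anywhere on the boundaries of vertices and edges (including on attaching arcs), each pointing in one of the two directions along the boundary. Partial duality: for an edge $e$, $G^{\{e\}}$ is obtained by removing the two attaching arcs of $e$, declaring the two remaining (previously free) boundary arcs of $e$ to be new vertex arcs, and attaching a new edge disc along new attaching arcs parallel to the removed ones; arrows and markings are kept in place, those lying on removed attaching arcs being placed on the corresponding new edge arcs. For $F\subseteq E(G)$, $G^F$ is obtained by doing this for every $e\in F$. Edges of $G^F$ are identified with those of $G$. For a spanning subgraph $F\subseteq E(G)$, $k(F)$ is its number of connected components and $\mathrm{bc}(F)$ its number of boundary components. Exactly one boundary component passes through the marking; the others form $\partial^c(F)$. Arrows on a boundary component are reduced by cancelling two consecutive arrows pointing in the same direction; a circular component then has $2j$ alternating arrows and contributes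 $K_j$; the marked component, read from the marking along the given orientation, has $2j$ alternating arrows and contributes $\Lambda_j$ if the first arrow points along the orientation and $\Lambda_j'$ otherwise; $K_0=\Lambda_0=\Lambda_0'=1$. The arrow Bollobás–Riordan polynomial is \[R_G(a,\mathbf b,c)=\sum_{F\subseteq E(G)} a^{k(F)}\Big(\prod_{e\in F}b_e\Big)c^{\mathrm{bc}(F)}\Big(\prod_{f\in\partial^c(F)}K_{j(f)}\Big)\Lambda^{(\prime)}_{j(F)}.\] *)

theory Defs
  imports Main
begin

text \<open>
The boundary of every vertex disc and every edge disc is cut into arcs at a
finite set of points \<open>Pts\<close> (the endpoints of the attaching arcs).  Three
fixed-point-free involutions describe the arcs:
 \<^item> \<open>vx\<close>  : \<open>p\<close> and \<open>vx p\<close> are the two ends of a vertex arc;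
 \<^item> \<open>att\<close> : \<open>p\<close> and \<open>att p\<close> are the two ends of an attaching arc (of edge
          \<open>edge_of p\<close>);  for points with \<open>edge_of p = None\<close> (used e.g. to
          represent isolated vertices) \<open>att\<close> just joins two vertex arcs;
 \<^item> \<open>fre\<close>  : \<open>p\<close> and \<open>fre p\<close> are the two ends of a free (non-attaching)
          boundary arc of the edge \<open>edge_of p\<close>.
Each edge has exactly four such points, its boundary being the 4-cycle
attaching arc / free arc / attaching arc / free arc.  Twisted edges and
non-orientable surfaces are covered since no orientation is assumed.

Arrows on an arc are a word \<open>wvx p\<close> (resp. \<open>watt p\<close>, \<open>wfre p\<close>) read from
\<open>p\<close> to the other end; \<open>True\<close> means the arrow points from \<open>p\<close> towards the
other end.  The marking lies on the vertex arc from \<open>mpt\<close> to \<open>vx mpt\<close>, after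
the first \<open>mpos\<close> arrows of \<open>wvx mpt\<close>, and the orientation of the marked
vertex boundary at the marking points from \<open>mpt\<close> towards \<open>vx mpt\<close>.
\<close>

record ('p, 'e) arrow_rg =
  Pts :: "'p set"
  Edges :: "'e set"
  edge_of :: "'p \<Rightarrow> 'e option"
  vx :: "'p \<Rightarrow> 'p"
  att :: "'p \<Rightarrow> 'p"
  fre :: "'p \<Rightarrow> 'p"
  wvx :: "'p \<Rightarrow> bool list"
  watt :: "'p \<Rightarrow> bool list"
  wfre :: "'p \<Rightarrow> bool list"
  mpt :: 'p
  mpos :: nat

definition edge_pts :: "('p, 'e) arrow_rg \<Rightarrow> 'e \<Rightarrow> 'p set" where
  "edge_pts G e = {p \<in> Pts G. edge_of G p = Some e}"

definition fpf_inv_on :: "('p \<Rightarrow> 'p) \<Rightarrow> 'p set \<Rightarrow> bool" where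
  "fpf_inv_on f A \<longleftrightarrow> (\<forall>p\<in>A. f p \<in> A \<and> f (f p) = p \<and> f p \<noteq> p)"

definition rev_word :: "bool list \<Rightarrow> bool list" where
  "rev_word w = rev (map Not w)"

definition wf_arg :: "('p, 'e) arrow_rg \<Rightarrow> bool" where
  "wf_arg G \<longleftrightarrow>
     finite (Pts G) \<and> finite (Edges G) \<and>
     fpf_inv_on (vx G) (Pts G) \<and> fpf_inv_on (att G) (Pts G) \<and>
     (\<forall>p\<in>Pts G. \<forall>e. edge_of G p = Some e \<longrightarrow> e \<in> Edges G) \<and>
     (\<forall>p\<in>Pts G. edge_of G (att G p) = edge_of G p) \<and>
     (\<forall>e\<in>Edges G. card (edge_pts G e) = 4 \<and> fpf_inv_on (fre G) (edge_pts G e) \<and>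
        (\<forall>p\<in>edge_pts G e. fre G p \<noteq> att G p)) \<and>
     (\<forall>p\<in>Pts G. wvx G (vx G p) = rev_word (wvx G p) \<and> watt G (att G p) = rev_word (watt G p)) \<and>
     (\<forall>p\<in>Pts G. edge_of G p \<noteq> None \<longrightarrow> wfre G (fre G p) = rev_word (wfre G p)) \<and>
     mpt G \<in> Pts G \<and> mpos G \<le> length (wvx G (mpt G))"

text \<open>Partial duality with respect to \<open>F\<close>: for every edge in \<open>F\<close> the roles of
attaching arcs and free arcs are exchanged (old free arcs become arcs lying on
vertex boundaries, the new edge's free arcs run along the removed attaching
arcs); arrows stay on their arcs, vertex arcs and marking are unchanged.\<close>

definition in_edges :: "('p, 'e) arrow_rg \<Rightarrow> 'e set \<Rightarrow> 'p \<Rightarrow> bool" where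
  "in_edges G A p \<longleftrightarrow> (\<exists>e\<in>A. edge_of G p = Some e)"

definition pdual :: "('p, 'e) arrow_rg \<Rightarrow> 'e set \<Rightarrow> ('p, 'e) arrow_rg" where
  "pdual G F = G\<lparr> att := (\<lambda>p. if in_edges G F p then fre G p else att G p),
                  fre := (\<lambda>p. if in_edges G F p then att G p else fre G p),
                  watt := (\<lambda>p. if in_edges G F p then wfre G p else watt G p),
                  wfre := (\<lambda>p. if in_edges G F p then watt G p else wfre G p) \<rparr>"

text \<open>Boundary of the spanning subgraph with edge set \<open>A\<close>: it alternates vertex
arcs and, at each edge point, the free arc if the edge is in \<open>A\<close> and the
attaching arc otherwise.\<close>

definition tau :: "('p, 'e) arrow_rg \<Rightarrow> 'e set \<Rightarrow> 'p \<Rightarrow> 'p" where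
  "tau G A p = (if in_edges G A p then fre G p else att G p)"

definition wtau :: "('p, 'e) arrow_rg \<Rightarrow> 'e set \<Rightarrow> 'p \<Rightarrow> bool list" where
  "wtau G A p = (if in_edges G A p then wfre G p else watt G p)"

definition rho :: "('p, 'e) arrow_rg \<Rightarrow> 'e set \<Rightarrow> 'p \<Rightarrow> 'p" where
  "rho G A p = tau G A (vx G p)"

definition period :: "('p, 'e) arrow_rg \<Rightarrow> 'e set \<Rightarrow> 'p \<Rightarrow> nat" where
  "period G A p = (LEAST n. 0 < n \<and> (rho G A ^^ n) p = p)"

definition walk_word :: "('p, 'e) arrow_rg \<Rightarrow> 'e set \<Rightarrow> 'p \<Rightarrow> bool list" where
  "walk_word G A p = concat (map (\<lambda>i. wvx G ((rho G A ^^ i) p) @ wtau G A (vx G ((rho G A ^^ i) p)))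
                               [0..<period G A p])"

definition bnd_rel :: "('p, 'e) arrow_rg \<Rightarrow> 'e set \<Rightarrow> ('p \<times> 'p) set" where
  "bnd_rel G A = {(p, q). p \<in> Pts G \<and> (q = vx G p \<or> q = tau G A p)}"

definition bcomps :: "('p, 'e) arrow_rg \<Rightarrow> 'e set \<Rightarrow> 'p set set" where
  "bcomps G A = Pts G // (bnd_rel G A)\<^sup>*"

definition marked_comp :: "('p, 'e) arrow_rg \<Rightarrow> 'e set \<Rightarrow> 'p set" where
  "marked_comp G A = (bnd_rel G A)\<^sup>* `` {mpt G}"

definition conn_rel :: "('p, 'e) arrow_rg \<Rightarrow> 'e set \<Rightarrow> ('p \<times> 'p) set" where
  "conn_rel G A = {(p, q). p \<in> Pts G \<and>
      (q = vx G p \<or> q = att G p \<or> (q = fre G p \<and> in_edges G A p))}"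

definition kcomp :: "('p, 'e) arrow_rg \<Rightarrow> 'e set \<Rightarrow> nat" where
  "kcomp G A = card (Pts G // (conn_rel G A)\<^sup>*)"

text \<open>Cancellation of two consecutive arrows pointing in the same direction:
linear reduction, and additionally across the ends for circular words.\<close>

fun red :: "bool list \<Rightarrow> bool list" where
  "red [] = []"
| "red (x # xs) = (case red xs of [] \<Rightarrow> [x] | y # ys \<Rightarrow> (if x = y then ys else x # y # ys))"

function cyc_red :: "bool list \<Rightarrow> bool list" where
  "cyc_red w = (if 2 \<le> length w \<and> hd w = last w then cyc_red (butlast (tl w)) else w)"
  by pat_completeness auto
termination by (relation "measure length") auto

definition circ_j :: "bool list \<Rightarrow> nat" where
  "circ_j w = length (cyc_red (red w)) div 2"

definition Kval :: "(nat \<Rightarrow> 'a::field) \<Rightarrow> nat \<Rightarrow> 'a" where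
  "Kval K j = (if j = 0 then 1 else K j)"

definition marked_val :: "(nat \<Rightarrow> 'a::field) \<Rightarrow> (nat \<Rightarrow> 'a) \<Rightarrow> bool list \<Rightarrow> 'a" where
  "marked_val Lam Lam' w =
     (let r = red w; j = length r div 2 in
      if j = 0 then 1 else if hd r then Lam j else Lam' j)"

text \<open>The arrow Bollobas--Riordan polynomial, evaluated at field values
(\<open>K j\<close>, \<open>Lam j\<close>, \<open>Lam' j\<close> for \<open>j \<ge> 1\<close>; \<open>K_0 = Lambda_0 = Lambda_0' = 1\<close>).\<close>

definition arrowBR :: "('p, 'e) arrow_rg \<Rightarrow> 'a::field \<Rightarrow> ('e \<Rightarrow> 'a) \<Rightarrow> 'a \<Rightarrow>
    (nat \<Rightarrow> 'a) \<Rightarrow> (nat \<Rightarrow> 'a) \<Rightarrow> (nat \<Rightarrow> 'a) \<Rightarrow> 'a" where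
  "arrowBR G a b c K Lam Lam' =
     (\<Sum>A\<in>Pow (Edges G).
        a ^ kcomp G A * (\<Prod>e\<in>A. b e) * c ^ card (bcomps G A) *
        (\<Prod>C\<in>bcomps G A - {marked_comp G A}. Kval K (circ_j (walk_word G A (SOME p. p \<in> C)))) *
        marked_val Lam Lam' (rotate (mpos G) (walk_word G A (mpt G))))"

end

theory Submission
  imports Defs
begin

declare cyc_red.simps[simp del]

definition sdiff :: "'e set \<Rightarrow> 'e set \<Rightarrow> 'e set" where
  "sdiff A F = (A - F) \<union> (F - A)"

lemma in_edges_pd: "in_edges (pdual G F) X p = in_edges G X p"
  by (simp add: in_edges_def pdual_def)

lemma tau_pd: "tau (pdual G F) (sdiff A F) = tau G A"
  by (rule ext) (auto simp: tau_def pdual_def in_edges_def sdiff_def)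

lemma wtau_pd: "wtau (pdual G F) (sdiff A F) = wtau G A"
  by (rule ext) (auto simp: wtau_def pdual_def in_edges_def sdiff_def)

lemma rho_pd: "rho (pdual G F) (sdiff A F) = rho G A"
  by (rule ext) (simp add: rho_def tau_pd, simp add: pdual_def)

lemma period_pd: "period (pdual G F) (sdiff A F) = period G A"
  by (rule ext) (simp add: period_def rho_pd)

lemma walk_pd: "walk_word (pdual G F) (sdiff A F) = walk_word G A"
  by (rule ext) (simp add: walk_word_def rho_pd period_pd wtau_pd, simp add: pdual_def)

lemma bnd_pd: "bnd_rel (pdual G F) (sdiff A F) = bnd_rel G A"
  unfolding bnd_rel_def tau_pd by (simp add: pdual_def)

lemma bcomps_pd: "bcomps (pdual G F) (sdiff A F) = bcomps G A"
  unfolding bcomps_def bnd_pd by (simp add: pdual_def)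

lemma marked_pd: "marked_comp (pdual G F) (sdiff A F) = marked_comp G A"
  unfolding marked_comp_def bnd_pd by (simp add: pdual_def)

lemma prod_lemma:
  fixes b :: "'e \<Rightarrow> 'a::field"
  assumes fin: "finite E" and A: "A \<subseteq> E" and FE: "F \<subseteq> E" and nz: "\<forall>e\<in>F. b e \<noteq> 0"
  shows "(\<Prod>e\<in>A. b e) = (\<Prod>e\<in>F. b e) * (\<Prod>e\<in>sdiff A F. if e \<in> F then 1 / b e else b e)"
proof -
  have fA: "finite A" and fF: "finite F" using fin A FE finite_subset by auto
  have s1: "(\<Prod>e\<in>sdiff A F. if e \<in> F then 1 / b e else b e)
      = (\<Prod>e\<in>A - F. b e) * (\<Prod>e\<in>F - A. 1 / b e)"
    unfolding sdiff_def
    by (subst prod.union_disjoint) (use fA fF in auto)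
  have pF: "(\<Prod>e\<in>F. b e) = (\<Prod>e\<in>A \<inter> F. b e) * (\<Prod>e\<in>F - A. b e)"
    using prod.Int_Diff[OF fF, of b A] by (simp add: Int_commute)
  have pA: "(\<Prod>e\<in>A. b e) = (\<Prod>e\<in>A \<inter> F. b e) * (\<Prod>e\<in>A - F. b e)"
    using prod.Int_Diff[OF fA, of b F] by simp
  have inv: "(\<Prod>e\<in>F - A. b e) * (\<Prod>e\<in>F - A. 1 / b e) = 1"
    using nz by (simp add: prod.distrib[symmetric])
  define P where "P = (\<Prod>e\<in>A \<inter> F. b e)"
  define Q where "Q = (\<Prod>e\<in>F - A. b e)"
  define R where "R = (\<Prod>e\<in>F - A. 1 / b e)"
  define S where "S = (\<Prod>e\<in>A - F. b e)"
  have "P * S = (P * Q) * (S * R)"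
  proof -
    have "(P * Q) * (S * R) = P * S * (Q * R)" by (simp add: mult_ac)
    also have "Q * R = 1" using inv by (simp add: Q_def R_def)
    finally show ?thesis by simp
  qed
  then show ?thesis unfolding s1 pF pA P_def Q_def R_def S_def .
qed

theorem mainTheorem8:
  fixes G :: "('p, 'e) arrow_rg" and F :: "'e set"
    and b :: "'e \<Rightarrow> 'a::field" and c :: 'a and K Lam Lam' :: "nat \<Rightarrow> 'a"
  assumes "wf_arg G"
    and "F \<subseteq> Edges G"
    and "\<forall>e\<in>F. b e \<noteq> 0"
  shows "arrowBR G 1 b c K Lam Lam' =
         (\<Prod>e\<in>F. b e) * arrowBR (pdual G F) 1 (\<lambda>e. if e \<in> F then 1 / b e else b e) c K Lam Lam'"
proof -
  have fin: "finite (Edges G)" using assms(1) by (simp add: wf_arg_def)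
  have E: "Edges (pdual G F) = Edges G" "mpos (pdual G F) = mpos G" "mpt (pdual G F) = mpt G"
    by (simp_all add: pdual_def)
  define T where "T A = c ^ card (bcomps G A) *
        (\<Prod>C\<in>bcomps G A - {marked_comp G A}. Kval K (circ_j (walk_word G A (SOME p. p \<in> C)))) *
        marked_val Lam Lam' (rotate (mpos G) (walk_word G A (mpt G)))" for A
  have bij: "bij_betw (\<lambda>A. sdiff A F) (Pow (Edges G)) (Pow (Edges G))"
  proof (rule bij_betw_byWitness[where f' = "\<lambda>A. sdiff A F"])
    show "\<forall>a\<in>Pow (Edges G). sdiff (sdiff a F) F = a" by (auto simp: sdiff_def)
    show "\<forall>a\<in>Pow (Edges G). sdiff (sdiff a F) F = a" by (auto simp: sdiff_def)
    show "(\<lambda>A. sdiff A F) ` Pow (Edges G) \<subseteq> Pow (Edges G)" using assms(2) by (auto simp: sdiff_def)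
    show "(\<lambda>A. sdiff A F) ` Pow (Edges G) \<subseteq> Pow (Edges G)" using assms(2) by (auto simp: sdiff_def)
  qed
  have "arrowBR (pdual G F) 1 (\<lambda>e. if e \<in> F then 1 / b e else b e) c K Lam Lam'
     = (\<Sum>A\<in>Pow (Edges G). (\<Prod>e\<in>sdiff A F. if e \<in> F then 1 / b e else b e) * T A)"
    unfolding arrowBR_def E
    apply (subst sum.reindex_bij_betw[OF bij, symmetric])
    apply (rule sum.cong[OF refl])
    unfolding T_def bcomps_pd marked_pd walk_pd E power_one mult_1_left mult.assoc
    apply (rule refl)
    done
  moreover have "arrowBR G 1 b c K Lam Lam' = (\<Sum>A\<in>Pow (Edges G). (\<Prod>e\<in>F. b e) *
        ((\<Prod>e\<in>sdiff A F. if e \<in> F then 1 / b e else b e) * T A))"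
    unfolding arrowBR_def
    apply (rule sum.cong[OF refl])
    apply (subst prod_lemma[OF fin _ assms(2) assms(3)])
     apply simp
    apply (simp add: T_def mult.assoc)
    done
  ultimately show ?thesis by (simp add: sum_distrib_left)
qed

end
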